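(* Let $n\ge1$, $d\in(0,2]$, and for $\eta\in[0,\pi/2]$ let $T_\eta=\{(\cos\eta\,\mathbf{v}_1;\sin\eta\,\mathbf{v}_2):\mathbf{v}_1,\mathbf{v}_2\in S^{n-1}\}\subset\mathbb{R}^{2n}$. Put $\Delta\eta=2\arcsin(d/2)$ and $t(d)=\left\lfloor\frac{\pi}{4\arcsin(d/2)}\right\rfloor$. Then: (1) the minimum angular interval $|\eta-\eta'|$ between $\eta,\eta'\in[0,\pi/2]$ for which the leaves $T_\eta,T_{\eta'}$ are at minimum distance at least $d$ is $\Delta\eta=2\arcsin(d/2)$; (2) the maximum number of disjoint intervals of length $\Delta\eta$ fitting in $[0,\pi/2]$ is $t(d)$; (3) the leaves $T_\eta$ are pairwise at minimum distance at least $d$ if the parameters are chosen as either (a) $\eta=\eta_0+k\Delta\eta$ for $k\in\{0,1,\dots,t(d)\}$, where $0\le\eta_0\le(\pi/2-t(d)\Delta\eta)/2$, or (b) $\eta=\pi/4+k\Delta\eta$ for $k\in\{0,1,\dots,\lfloor t(d)/2\rfloor\}$.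
   Context: $S^{n-1}$ is the unit sphere of $\mathbb{R}^n$; the minimum distance between two sets $A,B\subset\mathbb{R}^{2n}$ is $\inf\{\|a-b\|:a\in A,b\in B\}$. *)

theory Defs
  imports "HOL-Analysis.Analysis"
begin

text \<open>The leaf T_eta in R^(2n), where R^(2n) is rendered as real^('n + 'n):
  the Inl-coordinates carry cos eta * v1, the Inr-coordinates carry sin eta * v2,
  with v1, v2 on the unit sphere S^(n-1) of real^'n.\<close>
definition leaf :: "real \<Rightarrow> (real^('n::finite + 'n)) set" where
  "leaf \<eta> = {(\<chi> i. case i of Inl j \<Rightarrow> cos \<eta> * (v1 $ j) | Inr j \<Rightarrow> sin \<eta> * (v2 $ j)) | v1 v2.
                 v1 \<in> sphere (0::real^'n) 1 \<and> v2 \<in> sphere (0::real^'n) 1}"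

end

theory Submission
  imports Defs
begin

definition P :: "real \<Rightarrow> real \<Rightarrow> real^'n::finite \<Rightarrow> real^'n \<Rightarrow> real^('n+'n)" where
  "P c s v w = (\<chi> i. case i of Inl j \<Rightarrow> c * (v $ j) | Inr j \<Rightarrow> s * (w $ j))"

lemma leaf_P: "leaf \<eta> = {P (cos \<eta>) (sin \<eta>) v w | v w. v \<in> sphere 0 1 \<and> w \<in> sphere 0 1}"
  unfolding leaf_def P_def by simp

lemma dist_P: "(dist (P c s v w) (P c' s' v' w'))^2 = (dist (c *\<^sub>R v) (c' *\<^sub>R v'))^2 + (dist (s *\<^sub>R w) (s' *\<^sub>R w'))^2"
proof -
  have "(dist (P c s v w) (P c' s' v' w'))^2 = (\<Sum>i\<in>UNIV <+> UNIV. (P c s v w - P c' s' v' w')$i * (P c s v w - P c' s' v' w')$i)"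
    by (simp add: dist_norm power2_norm_eq_inner inner_vec_def)
  also have "\<dots> = (\<Sum>j\<in>UNIV. (c * v$j - c' * v'$j) * (c * v$j - c' * v'$j)) + (\<Sum>j\<in>UNIV. (s * w$j - s' * w'$j) * (s * w$j - s' * w'$j))"
    by (subst sum.Plus) (auto simp: P_def)
  also have "\<dots> = (dist (c *\<^sub>R v) (c' *\<^sub>R v'))^2 + (dist (s *\<^sub>R w) (s' *\<^sub>R w'))^2"
    by (simp add: dist_norm power2_norm_eq_inner inner_vec_def)
  finally show ?thesis .
qed

lemma dist_sc_ge: assumes "norm v = 1" "norm v' = 1" "c \<ge> 0" "c' \<ge> 0"
  shows "\<bar>c - c'\<bar> \<le> dist (c *\<^sub>R v) (c' *\<^sub>R v')"
proof -
  have "\<bar>norm (c *\<^sub>R v) - norm (c' *\<^sub>R v')\<bar> \<le> norm (c *\<^sub>R v - c' *\<^sub>R v')" by (rule norm_triangle_ineq3)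
  thus ?thesis using assms by (simp add: dist_norm)
qed

lemma dist_same_u: "norm (u::'a::real_normed_vector) = 1 \<Longrightarrow> dist (c *\<^sub>R u) (c' *\<^sub>R u) = \<bar>c - c'\<bar>"
  by (simp add: dist_norm flip: scaleR_diff_left)

lemma setdist_leaf:
  assumes "\<eta> \<in> {0..pi/2}" "\<eta>' \<in> {0..pi/2}"
  shows "setdist (leaf \<eta> :: (real^('n::finite + 'n)) set) (leaf \<eta>') = sqrt ((cos \<eta> - cos \<eta>')^2 + (sin \<eta> - sin \<eta>')^2)"
    (is "_ = ?D")
proof (rule antisym)
  define u :: "real^'n" where "u = axis undefined 1"
  have u: "u \<in> sphere 0 1" by (simp add: u_def)
  have c: "cos \<eta> \<ge> 0" "cos \<eta>' \<ge> 0" "sin \<eta> \<ge> 0" "sin \<eta>' \<ge> 0" using assms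
    by (auto intro!: cos_ge_zero sin_ge_zero)
  have "(dist (P (cos \<eta>) (sin \<eta>) u u) (P (cos \<eta>') (sin \<eta>') u u))^2 = ?D^2"
    using u by (simp add: dist_P dist_same_u)
  hence e: "dist (P (cos \<eta>) (sin \<eta>) u u) (P (cos \<eta>') (sin \<eta>') u u) = ?D"
    by (subst (asm) power2_eq_iff_nonneg) auto
  show "setdist (leaf \<eta> :: (real^('n::finite + 'n)) set) (leaf \<eta>') \<le> ?D"
    unfolding e[symmetric] by (rule setdist_le_dist) (use u in \<open>auto simp: leaf_P\<close>)
  show "?D \<le> setdist (leaf \<eta> :: (real^('n::finite + 'n)) set) (leaf \<eta>')"
  proof (rule le_setdistI)
    show "leaf \<eta> \<noteq> ({} :: (real^('n::finite + 'n)) set)" "leaf \<eta>' \<noteq> ({} :: (real^('n::finite + 'n)) set)"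
      using u by (auto simp: leaf_P)
    fix x y :: "real^('n + 'n)" assume "x \<in> leaf \<eta>" "y \<in> leaf \<eta>'"
    then obtain v w v' w' where x: "x = P (cos \<eta>) (sin \<eta>) v w" and y: "y = P (cos \<eta>') (sin \<eta>') v' w'"
      and n: "norm v = 1" "norm w = 1" "norm v' = 1" "norm w' = 1" by (auto simp: leaf_P)
    have a: "\<bar>cos \<eta> - cos \<eta>'\<bar> \<le> dist (cos \<eta> *\<^sub>R v) (cos \<eta>' *\<^sub>R v')"
      by (rule dist_sc_ge) (use n c in auto)
    have b: "\<bar>sin \<eta> - sin \<eta>'\<bar> \<le> dist (sin \<eta> *\<^sub>R w) (sin \<eta>' *\<^sub>R w')"
      by (rule dist_sc_ge) (use n c in auto)
    have "?D^2 \<le> (dist x y)^2"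
      unfolding x y dist_P using power_mono[OF a, of 2] power_mono[OF b, of 2] by (simp add: power2_abs)
    thus "?D \<le> dist x y" by (rule power2_le_imp_le) simp
  qed
qed

lemma chord: fixes a b :: real shows "(cos a - cos b)^2 + (sin a - sin b)^2 = (2 * sin (\<bar>a - b\<bar>/2))^2"
proof -
  have "(cos a - cos b)^2 + (sin a - sin b)^2 = 2 - 2 * cos (a - b)"
    using sin_cos_squared_add3[of a] sin_cos_squared_add3[of b]
    by (simp add: cos_diff power2_eq_square algebra_simps)
  also have "cos (a - b) = cos \<bar>a - b\<bar>" by (simp add: abs_if cos_minus[of "a-b", symmetric])
  also have "cos \<bar>a - b\<bar> = 1 - 2 * (sin (\<bar>a - b\<bar>/2))^2"
    using cos_double_sin[of "\<bar>a - b\<bar>/2"] by simp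
  finally show ?thesis by (simp add: power2_eq_square)
qed

lemma part1_iff:
  fixes d \<delta> :: real
  assumes "0 < d" "d \<le> 2" "0 \<le> \<delta>" "\<delta> \<le> pi/2"
  shows "d \<le> 2 * sin (\<delta>/2) \<longleftrightarrow> 2 * arcsin (d/2) \<le> \<delta>"
proof
  assume h: "d \<le> 2 * sin (\<delta>/2)"
  have "arcsin (d/2) \<le> arcsin (sin (\<delta>/2))"
    by (rule arcsin_le_arcsin) (use h assms in \<open>auto simp: sin_le_one\<close>)
  also have "\<dots> = \<delta>/2" by (rule arcsin_sin) (use assms in auto)
  finally show "2 * arcsin (d/2) \<le> \<delta>" by simp
next
  assume h: "2 * arcsin (d/2) \<le> \<delta>"
  have "d/2 = sin (arcsin (d/2))" using assms by simp
  also have "\<dots> \<le> sin (\<delta>/2)"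
    by (rule sin_monotone_2pi_le) (use h assms arcsin_lbound[of "d/2"] in auto)
  finally show "d \<le> 2 * sin (\<delta>/2)" by simp
qed

lemma leaf_iff:
  fixes d :: real
  assumes "0 < d" "d \<le> 2" "\<eta> \<in> {0..pi/2}" "\<eta>' \<in> {0..pi/2}"
  shows "d \<le> setdist (leaf \<eta> :: (real^('n::finite + 'n)) set) (leaf \<eta>') \<longleftrightarrow> 2 * arcsin (d/2) \<le> \<bar>\<eta> - \<eta>'\<bar>"
proof -
  have s: "0 \<le> sin (\<bar>\<eta> - \<eta>'\<bar>/2)" by (rule sin_ge_zero) (use assms in auto)
  have "setdist (leaf \<eta> :: (real^('n::finite + 'n)) set) (leaf \<eta>') = 2 * sin (\<bar>\<eta> - \<eta>'\<bar>/2)"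
  proof -
    have "setdist (leaf \<eta> :: (real^('n::finite + 'n)) set) (leaf \<eta>') = sqrt ((2 * sin (\<bar>\<eta> - \<eta>'\<bar>/2))^2)"
      by (simp only: setdist_leaf[OF assms(3,4)] chord)
    also have "\<dots> = 2 * sin (\<bar>\<eta> - \<eta>'\<bar>/2)" by (simp only: real_sqrt_abs) (use s in simp)
    finally show ?thesis .
  qed
  moreover have "\<bar>\<eta> - \<eta>'\<bar> \<le> pi/2" using assms by (auto simp: abs_if)
  ultimately show ?thesis using part1_iff[OF assms(1,2), of "\<bar>\<eta> - \<eta>'\<bar>"] by simp
qed

lemma pack:
  fixes A :: "real set"
  assumes "finite A" "A \<noteq> {}" "A \<subseteq> {lo..hi}" "\<forall>x\<in>A. \<forall>y\<in>A. x \<noteq> y \<longrightarrow> D \<le> \<bar>x - y\<bar>"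
  shows "real (card A) * D \<le> hi - lo + D"
  using assms
proof (induction "card A" arbitrary: A hi rule: less_induct)
  case less
  define M where "M = Max A"
  have M: "M \<in> A" "\<forall>x\<in>A. x \<le> M" using less.prems by (auto simp: M_def)
  show ?case
  proof (cases "A - {M} = {}")
    case True
    hence "A = {M}" using M by auto
    thus ?thesis using less.prems by auto
  next
    case False
    have B: "A - {M} \<subseteq> {lo..M - D}"
    proof
      fix x assume x: "x \<in> A - {M}"
      hence "D \<le> \<bar>x - M\<bar>" using less.prems(4) M by auto
      moreover have "x \<le> M" using M x by auto
      ultimately show "x \<in> {lo..M - D}" using x less.prems(3) by auto
    qed
    have c: "card (A - {M}) < card A" using card_Diff1_less[OF less.prems(1) M(1)] .
    have "real (card (A - {M})) * D \<le> (M - D) - lo + D"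
      by (rule less.hyps[OF c]) (use less.prems False B in auto)
    moreover have "card A = card (A - {M}) + 1" using M less.prems(1)
      by (metis card_Suc_Diff1 Suc_eq_plus1)
    moreover have "M \<le> hi" using M less.prems(3) by auto
    ultimately show ?thesis by (simp add: algebra_simps)
  qed
qed

lemma overlap:
  fixes x y D :: real
  assumes "{x<..<x + D} \<inter> {y<..<y + D} = {}" "0 < D"
  shows "D \<le> \<bar>x - y\<bar>"
proof (rule ccontr)
  assume "\<not> D \<le> \<bar>x - y\<bar>"
  hence "(max x y + min x y + D)/2 \<in> {x<..<x + D} \<inter> {y<..<y + D}" by auto
  thus False using assms by auto
qed

lemma pack_fun:
  fixes a :: "nat \<Rightarrow> real"
  assumes "0 < D" "\<forall>i<k. 0 \<le> a i \<and> a i + D \<le> pi/2"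
    "\<forall>i<k. \<forall>j<k. i \<noteq> j \<longrightarrow> {a i<..<a i + D} \<inter> {a j<..<a j + D} = {}"
  shows "real k * D \<le> pi/2"
proof (cases "k = 0")
  case True thus ?thesis by simp
next
  case False
  have inj: "inj_on a {..<k}"
  proof (rule inj_onI)
    fix i j assume "i \<in> {..<k}" "j \<in> {..<k}" "a i = a j"
    thus "i = j" using assms(1,3) overlap[of "a i" D "a j"] by fastforce
  qed
  have "real (card (a ` {..<k})) * D \<le> (pi/2 - D) - 0 + D"
  proof (rule pack)
    show "a ` {..<k} \<subseteq> {0..pi/2 - D}" using assms(2) by auto
    show "\<forall>x\<in>a ` {..<k}. \<forall>y\<in>a ` {..<k}. x \<noteq> y \<longrightarrow> D \<le> \<bar>x - y\<bar>"
      using assms(1,3) overlap by blast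
  qed (use False in auto)
  thus ?thesis using card_image[OF inj] by simp
qed

theorem corollary1:
  fixes d :: real
  assumes "0 < d" and "d \<le> 2"
  defines "\<Delta> \<equiv> 2 * arcsin (d / 2)"
    and "t \<equiv> nat \<lfloor>pi / (4 * arcsin (d / 2))\<rfloor>"
  shows
    "(\<forall>\<eta> \<eta>'. \<eta> \<in> {0..pi/2} \<longrightarrow> \<eta>' \<in> {0..pi/2} \<longrightarrow>
        (d \<le> setdist (leaf \<eta> :: (real^('n::finite + 'n)) set) (leaf \<eta>') \<longleftrightarrow> \<Delta> \<le> \<bar>\<eta> - \<eta>'\<bar>))
   \<and> (let S = {k::nat. \<exists>a :: nat \<Rightarrow> real.
                  (\<forall>i<k. 0 \<le> a i \<and> a i + \<Delta> \<le> pi/2) \<and>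
                  (\<forall>i<k. \<forall>j<k. i \<noteq> j \<longrightarrow> {a i<..<a i + \<Delta>} \<inter> {a j<..<a j + \<Delta>} = {})}
      in t \<in> S \<and> (\<forall>k\<in>S. k \<le> t))
   \<and> (\<forall>\<eta>0. 0 \<le> \<eta>0 \<and> \<eta>0 \<le> (pi/2 - real t * \<Delta>) / 2 \<longrightarrow>
        (\<forall>j\<le>t. \<forall>k\<le>t. j \<noteq> k \<longrightarrow>
           d \<le> setdist (leaf (\<eta>0 + real j * \<Delta>) :: (real^('n + 'n)) set) (leaf (\<eta>0 + real k * \<Delta>))))
   \<and> (\<forall>j\<le>t div 2. \<forall>k\<le>t div 2. j \<noteq> k \<longrightarrow>
           d \<le> setdist (leaf (pi/4 + real j * \<Delta>) :: (real^('n + 'n)) set) (leaf (pi/4 + real k * \<Delta>)))"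
proof -
  have a0: "0 < arcsin (d/2)" using arcsin_less_arcsin[of 0 "d/2"] assms(1,2) by simp
  hence D0: "0 < \<Delta>" by (simp add: \<Delta>_def)
  have tle: "real t \<le> pi / (4 * arcsin (d / 2))" unfolding t_def using a0 by simp
  hence tD: "real t * \<Delta> \<le> pi/2" using a0 by (simp add: \<Delta>_def field_simps)
  have P1: "\<forall>\<eta> \<eta>'. \<eta> \<in> {0..pi/2} \<longrightarrow> \<eta>' \<in> {0..pi/2} \<longrightarrow>
        (d \<le> setdist (leaf \<eta> :: (real^('n::finite + 'n)) set) (leaf \<eta>') \<longleftrightarrow> \<Delta> \<le> \<bar>\<eta> - \<eta>'\<bar>)"
    using leaf_iff[OF assms(1,2)] unfolding \<Delta>_def by blast
  have sep: "\<Delta> \<le> \<bar>real j * \<Delta> - real k * \<Delta>\<bar>" if "j \<noteq> k" for j k :: nat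
  proof -
    have "1 \<le> \<bar>real j - real k\<bar>" using that by (cases "j < k") auto
    hence "1 * \<Delta> \<le> \<bar>real j - real k\<bar> * \<Delta>" using D0 by (intro mult_right_mono) auto
    thus ?thesis using D0 by (simp add: abs_mult left_diff_distrib[symmetric])
  qed
  have P2: "let S = {k::nat. \<exists>a :: nat \<Rightarrow> real.
                  (\<forall>i<k. 0 \<le> a i \<and> a i + \<Delta> \<le> pi/2) \<and>
                  (\<forall>i<k. \<forall>j<k. i \<noteq> j \<longrightarrow> {a i<..<a i + \<Delta>} \<inter> {a j<..<a j + \<Delta>} = {})}
      in t \<in> S \<and> (\<forall>k\<in>S. k \<le> t)"
    unfolding Let_def
  proof safe
    show "\<exists>a :: nat \<Rightarrow> real. (\<forall>i<t. 0 \<le> a i \<and> a i + \<Delta> \<le> pi/2) \<and>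
                  (\<forall>i<t. \<forall>j<t. i \<noteq> j \<longrightarrow> {a i<..<a i + \<Delta>} \<inter> {a j<..<a j + \<Delta>} = {})"
    proof (intro exI[of _ "\<lambda>i. real i * \<Delta>"] conjI allI impI)
      fix i assume i: "i < t"
      show "0 \<le> real i * \<Delta>" using D0 by simp
      have "real (i + 1) * \<Delta> \<le> real t * \<Delta>" using i D0 by (intro mult_right_mono) auto
      thus "real i * \<Delta> + \<Delta> \<le> pi/2" using tD by (simp add: algebra_simps)
    next
      fix i j assume "i < t" "j < t" "i \<noteq> j"
      hence "\<Delta> \<le> \<bar>real i * \<Delta> - real j * \<Delta>\<bar>" using sep by blast
      thus "{real i * \<Delta><..<real i * \<Delta> + \<Delta>} \<inter> {real j * \<Delta><..<real j * \<Delta> + \<Delta>} = {}"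
        by (auto simp: abs_if split: if_splits)
    qed
  next
    fix k :: nat and a :: "nat \<Rightarrow> real" assume h1: "\<forall>i<k. 0 \<le> a i \<and> a i + \<Delta> \<le> pi/2"
      and h2: "\<forall>i<k. \<forall>j<k. i \<noteq> j \<longrightarrow> {a i<..<a i + \<Delta>} \<inter> {a j<..<a j + \<Delta>} = {}"
    have "real k * \<Delta> \<le> pi/2" by (rule pack_fun[OF D0 h1 h2])
    hence "real k \<le> pi / (4 * arcsin (d / 2))" using a0 by (simp add: \<Delta>_def field_simps)
    thus "k \<le> t" unfolding t_def by (rule le_nat_floor)
  qed
  have P3: "\<forall>\<eta>0. 0 \<le> \<eta>0 \<and> \<eta>0 \<le> (pi/2 - real t * \<Delta>) / 2 \<longrightarrow>
        (\<forall>j\<le>t. \<forall>k\<le>t. j \<noteq> k \<longrightarrow>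
           d \<le> setdist (leaf (\<eta>0 + real j * \<Delta>) :: (real^('n + 'n)) set) (leaf (\<eta>0 + real k * \<Delta>)))"
  proof (intro allI impI)
    fix \<eta>0 :: real and j k :: nat assume h: "0 \<le> \<eta>0 \<and> \<eta>0 \<le> (pi/2 - real t * \<Delta>) / 2" and j: "j \<le> t" and k: "k \<le> t" and jk: "j \<noteq> k"
    from h have h0: "0 \<le> \<eta>0" and h1: "2 * \<eta>0 \<le> pi/2 - real t * \<Delta>" by auto
    have r: "\<eta>0 + real i * \<Delta> \<in> {0..pi/2}" if "i \<le> t" for i
    proof -
      have "real i * \<Delta> \<le> real t * \<Delta>" using that D0 by (intro mult_right_mono) auto
      moreover have "0 \<le> real i * \<Delta>" using D0 by simp
      ultimately have "0 \<le> \<eta>0 + real i * \<Delta>" "\<eta>0 + real i * \<Delta> \<le> pi/2" using h0 h1 by linarith+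
      thus ?thesis by simp
    qed
    show "d \<le> setdist (leaf (\<eta>0 + real j * \<Delta>) :: (real^('n + 'n)) set) (leaf (\<eta>0 + real k * \<Delta>))"
      using P1 r[OF j] r[OF k] sep[OF jk] by simp
  qed
  have P4: "\<forall>j\<le>t div 2. \<forall>k\<le>t div 2. j \<noteq> k \<longrightarrow>
           d \<le> setdist (leaf (pi/4 + real j * \<Delta>) :: (real^('n + 'n)) set) (leaf (pi/4 + real k * \<Delta>))"
  proof (intro allI impI)
    fix j k :: nat assume j: "j \<le> t div 2" and k: "k \<le> t div 2" and jk: "j \<noteq> k"
    have r: "pi/4 + real i * \<Delta> \<in> {0..pi/2}" if "i \<le> t div 2" for i
    proof -
      have "real (2 * i) \<le> real t" using that by simp
      hence "real (2 * i) * \<Delta> \<le> real t * \<Delta>" using D0 by (intro mult_right_mono) auto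
      moreover have "0 \<le> real i * \<Delta>" using D0 by simp
      ultimately have "0 \<le> pi/4 + real i * \<Delta>" "pi/4 + real i * \<Delta> \<le> pi/2" using tD pi_gt_zero by simp_all
      thus ?thesis by simp
    qed
    show "d \<le> setdist (leaf (pi/4 + real j * \<Delta>) :: (real^('n + 'n)) set) (leaf (pi/4 + real k * \<Delta>))"
      using P1 r[OF j] r[OF k] sep[OF jk] by simp
  qed
  show ?thesis using P1 P2 P3 P4 by blast
qed

end
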